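(* For every positive integer $\ell$, \[ \frac{\sum_{d\mid\ell}c_\ell(d)}{\nu(\ell)}\le \ell^{-\frac{\log(3/2)}{\log 2}}. \]
   Context: $\nu$ is the completely multiplicative function with $\nu(p)=p+1$ for primes $p$. The Chebyshev coefficients $c_{j,n}$ are defined by $x^n=\sum_{j=0}^n c_{j,n}U_j(x/2)$, with $U_j$ the Chebyshev polynomials of the second kind; for $d\mid\ell$, $c_\ell(d)=\prod_{p\mid\ell}c_{j_p,n_p}$ where $p^{j_p}\|d$, $p^{n_p}\|\ell$. *)

theory Defs
  imports "HOL-Computational_Algebra.Computational_Algebra" "HOL-Computational_Algebra.Primes"
begin

fun chebyU :: "nat \<Rightarrow> real poly" where
  "chebyU 0 = 1"
| "chebyU (Suc 0) = [:0, 2:]"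
| "chebyU (Suc (Suc n)) = [:0, 2:] * chebyU (Suc n) - chebyU n"

definition chebyU_half :: "nat \<Rightarrow> real poly" where
  "chebyU_half j = pcompose (chebyU j) [:0, 1/2:]"

definition cheb_coeffs :: "nat \<Rightarrow> (nat \<Rightarrow> real)" where
  "cheb_coeffs n = (THE c. (\<forall>j>n. c j = 0) \<and>
      monom 1 n = (\<Sum>j=0..n. smult (c j) (chebyU_half j)))"

definition cheb_c :: "nat \<Rightarrow> nat \<Rightarrow> real" where
  "cheb_c j n = cheb_coeffs n j"

definition c_ell :: "nat \<Rightarrow> nat \<Rightarrow> real" where
  "c_ell l d = (\<Prod>p\<in>prime_factors l. cheb_c (multiplicity p d) (multiplicity p l))"

definition nu :: "nat \<Rightarrow> real" where
  "nu l = (\<Prod>p\<in>prime_factors l. (real p + 1) ^ multiplicity p l)"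

end

theory Submission
  imports Defs
begin


lemma UH0: "chebyU_half 0 = 1" by (simp add: chebyU_half_def one_pCons pcompose_pCons)
lemma UH1: "chebyU_half (Suc 0) = [:0,1:]" by (simp add: chebyU_half_def pcompose_pCons)
lemma UH2: "chebyU_half (Suc (Suc n)) = pCons 0 (chebyU_half (Suc n)) - chebyU_half n"
proof -
  show ?thesis
    by (simp add: chebyU_half_def pcompose_diff pcompose_pCons pcompose_smult)
qed

lemma UH_coeff: "coeff (chebyU_half j) j = 1 \<and> degree (chebyU_half j) \<le> j"
proof (induction j rule: chebyU.induct)
  case 1 then show ?case by (simp add: UH0)
next
  case 2 then show ?case by (simp add: UH1)
next
  case (3 n)
  have d: "degree (pCons 0 (chebyU_half (Suc n))) \<le> Suc (Suc n)"
    using 3(1) by (metis degree_pCons_le le_SucI Suc_le_mono order_trans)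
  have "degree (chebyU_half (Suc (Suc n))) \<le> Suc (Suc n)"
    unfolding UH2 using d 3(2) by (meson degree_diff_le le_SucI order_trans)
  moreover have "coeff (chebyU_half n) (Suc (Suc n)) = 0"
    using 3(2) by (simp add: coeff_eq_0)
  ultimately show ?case using 3(1) by (simp add: UH2)
qed

lemma UH_poly2: "poly (chebyU_half j) 2 = real j + 1"
  by (induction j rule: chebyU.induct) (simp_all add: UH0 UH1 UH2)

fun cc :: "nat \<Rightarrow> nat \<Rightarrow> real" where
  "cc 0 j = (if j = 0 then 1 else 0)"
| "cc (Suc n) j = (if j = 0 then cc n 1 else cc n (j - 1) + cc n (j + 1))"

lemma cc_zero: "j > n \<Longrightarrow> cc n j = 0"
  by (induction n arbitrary: j) auto

lemma cc_nonneg: "cc n j \<ge> 0"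
  by (induction n arbitrary: j) auto

lemma UHx: "pCons 0 (chebyU_half j) = chebyU_half (Suc j) + (if j = 0 then 0 else chebyU_half (j - 1))"
proof (cases j)
  case 0 then show ?thesis by (simp add: UH0 UH1)
next
  case (Suc k) then show ?thesis by (simp add: UH2)
qed

lemma pCons0_sum: "pCons 0 (\<Sum>j\<in>A. f j) = (\<Sum>j\<in>A. pCons (0::'a::comm_ring_1) (f j))"
proof (induction A rule: infinite_finite_induct)
  case (insert x F)
  have "pCons 0 (f x + sum f F) = pCons (0+0) (f x + sum f F)" by simp
  also have "\<dots> = pCons 0 (f x) + pCons 0 (sum f F)" by (simp only: add_pCons)
  finally show ?case using insert by simp
qed auto

lemma rep: "monom 1 n = (\<Sum>j=0..n. smult (cc n j) (chebyU_half j))"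
proof (induction n)
  case 0 then show ?case by (simp add: UH0 one_pCons monom_0)
next
  case (Suc n)
  let ?U = chebyU_half
  have "monom 1 (Suc n) = (\<Sum>j=0..n. smult (cc n j) (pCons 0 (?U j)))"
    by (simp add: monom_Suc Suc pCons0_sum)
  also have "\<dots> = (\<Sum>j=0..n. smult (cc n j) (?U (Suc j))) +
       (\<Sum>j=0..n. smult (cc n j) (if j = 0 then 0 else ?U (j - 1)))"
    by (simp add: UHx smult_add_right sum.distrib)
  also have "(\<Sum>j=0..n. smult (cc n j) (if j = 0 then 0 else ?U (j - 1)))
      = (\<Sum>j=0..Suc n. smult (cc n j) (if j = 0 then 0 else ?U (j - 1)))"
    by (simp add: cc_zero)
  also have "\<dots> = (\<Sum>j=0..n. smult (cc n (Suc j)) (?U j))"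
    by (subst sum.atLeast0_atMost_Suc_shift) simp
  also have "(\<Sum>j=0..n. smult (cc n (Suc j)) (?U j)) = (\<Sum>j=0..Suc n. smult (cc n (j+1)) (?U j))"
    by (simp add: cc_zero)
  also have "(\<Sum>j=0..n. smult (cc n j) (?U (Suc j))) = 
     (\<Sum>j=0..Suc n. smult (if j = 0 then 0 else cc n (j - 1)) (?U j))"
    by (subst sum.atLeast0_atMost_Suc_shift) simp
  finally have "monom 1 (Suc n) = (\<Sum>j=0..Suc n. smult (if j = 0 then 0 else cc n (j - 1)) (?U j)
      + smult (cc n (j+1)) (?U j))"
    by (simp add: sum.distrib)
  also have "\<dots> = (\<Sum>j=0..Suc n. smult (cc (Suc n) j) (?U j))"
    by (intro sum.cong) (auto simp: smult_add_left[symmetric])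
  finally show ?case .
qed

lemma uniq: "(\<Sum>j=0..n. smult (e j) (chebyU_half j)) = 0 \<Longrightarrow> j \<le> n \<Longrightarrow> e j = 0"
proof (induction n arbitrary: j)
  case 0 then show ?case using UH_coeff[of 0] by (simp add: UH0)
next
  case (Suc n)
  have c: "coeff (\<Sum>j=0..n. smult (e j) (chebyU_half j)) (Suc n) = 0"
    unfolding coeff_sum
  proof (intro sum.neutral ballI)
    fix j assume "j \<in> {0..n}"
    then have "degree (chebyU_half j) < Suc n" using UH_coeff[of j] by auto
    then show "coeff (smult (e j) (chebyU_half j)) (Suc n) = 0" by (simp add: coeff_eq_0)
  qed
  have "coeff (\<Sum>j=0..Suc n. smult (e j) (chebyU_half j)) (Suc n) = e (Suc n)"
    using c UH_coeff[of "Suc n"] by simp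
  moreover have "coeff (\<Sum>j=0..Suc n. smult (e j) (chebyU_half j)) (Suc n) = 0"
    using Suc.prems(1) by (simp only: coeff_0)
  ultimately have en: "e (Suc n) = 0" by simp
  then have "(\<Sum>j=0..n. smult (e j) (chebyU_half j)) = 0" using Suc.prems by simp
  then show ?case using Suc.IH Suc.prems(2) en by (metis le_Suc_eq)
qed

lemma cheb_coeffs_eq: "cheb_coeffs n = cc n"
  unfolding cheb_coeffs_def
proof (rule the_equality)
  show "(\<forall>j>n. cc n j = 0) \<and> monom 1 n = (\<Sum>j = 0..n. smult (cc n j) (chebyU_half j))"
    using cc_zero rep by blast
next
  fix c assume h: "(\<forall>j>n. c j = 0) \<and> monom 1 n = (\<Sum>j = 0..n. smult (c j) (chebyU_half j))"
  have "(\<Sum>j=0..n. smult (c j - cc n j) (chebyU_half j)) = 0"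
    using h rep[of n] by (simp add: smult_diff_left sum_subtractf)
  then have "j \<le> n \<Longrightarrow> c j = cc n j" for j using uniq by fastforce
  then show "c = cc n" using h cc_zero by (metis ext not_le)
qed

lemma cc_sum: "(\<Sum>j=0..n. cc n j) \<le> 2 ^ n"
proof -
  have "(2::real) ^ n = poly (monom 1 n) 2" by (simp add: poly_monom)
  also have "\<dots> = (\<Sum>j=0..n. cc n j * (real j + 1))"
    by (subst rep) (simp add: poly_sum UH_poly2)
  finally have e: "(2::real) ^ n = (\<Sum>j=0..n. cc n j * (real j + 1))" .
  have "(\<Sum>j=0..n. cc n j) \<le> (\<Sum>j=0..n. cc n j * (real j + 1))"
    by (intro sum_mono) (simp add: cc_nonneg algebra_simps)
  then show ?thesis using e by simp
qed



lemma div_sum_prod: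
  fixes P :: "nat set" and n :: "nat \<Rightarrow> nat" and g :: "nat \<Rightarrow> nat \<Rightarrow> real"
  assumes "finite P" "\<forall>p\<in>P. prime p"
  shows "(\<Sum>d | d dvd (\<Prod>p\<in>P. p ^ n p). \<Prod>p\<in>P. g p (multiplicity p d)) = (\<Prod>p\<in>P. \<Sum>i\<le>n p. g p i)"
  using assms
proof (induction P rule: finite_induct)
  case empty then show ?case by simp
next
  case (insert q P)
  define L where "L = (\<Prod>p\<in>P. p ^ n p)"
  define k where "k = n q"
  define D where "D = {e. e dvd L}"
  define D' where "D' = {d. d dvd q ^ k * L}"
  define F where "F e = (\<Prod>p\<in>P. g p (multiplicity p e))" for e
  have qp: "prime q" using insert by auto
  have Pp: "\<forall>p\<in>P. prime p" using insert by auto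
  have L0: "L > 0" unfolding L_def using Pp by (auto intro!: prod_pos simp: prime_gt_0_nat)
  have nqL: "\<not> q dvd L"
  proof
    assume "q dvd L"
    then obtain p where "p \<in> P" "q dvd p ^ n p" unfolding L_def
      using qp insert(1) by (auto simp: prime_dvd_prod_iff)
    then have "q dvd p" using qp prime_dvd_power by blast
    then have "q = p" using qp Pp \<open>p \<in> P\<close> primes_dvd_imp_eq by blast
    then show False using \<open>p \<in> P\<close> insert(2) by simp
  qed
  have mq: "multiplicity q (q ^ i * e) = i" if "e \<in> D" for i e
  proof -
    have e0: "e \<noteq> 0" using that L0 unfolding D_def by auto
    have "\<not> q dvd e" using that nqL unfolding D_def using dvd_trans by blast
    then have "multiplicity q e = 0" by (rule not_dvd_imp_multiplicity_0)
    then show ?thesis using e0 qp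
      by (simp add: prime_elem_multiplicity_mult_distrib prime_gt_0_nat)
  qed
  have mp: "multiplicity p (q ^ i * e) = multiplicity p e" if "e \<in> D" "p \<in> P" for i e p
  proof -
    have e0: "e \<noteq> 0" using that L0 unfolding D_def by auto
    have "p \<noteq> q" using that insert(2) by auto
    then have "multiplicity p (q ^ i) = 0" using qp Pp that(2) multiplicity_distinct_prime_power by blast
    then show ?thesis using e0 qp Pp that(2)
      by (simp add: prime_elem_multiplicity_mult_distrib prime_gt_0_nat)
  qed
  have inj: "inj_on (\<lambda>(i, e). q ^ i * e) ({..k} \<times> D)"
  proof (rule inj_onI, clarify)
    fix i e i' e' assume h: "i \<le> k" "e \<in> D" "i' \<le> k" "e' \<in> D" "q ^ i * e = q ^ i' * e'"
    have "i = i'" using mq[OF h(2), of i] mq[OF h(4), of i'] h(5) by simp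
    then show "i = i' \<and> e = e'" using h(5) qp by (simp add: prime_gt_0_nat)
  qed
  have img: "(\<lambda>(i, e). q ^ i * e) ` ({..k} \<times> D) = D'"
  proof
    show "(\<lambda>(i, e). q ^ i * e) ` ({..k} \<times> D) \<subseteq> D'"
      unfolding D_def D'_def by (auto intro!: mult_dvd_mono simp: le_imp_power_dvd)
  next
    show "D' \<subseteq> (\<lambda>(i, e). q ^ i * e) ` ({..k} \<times> D)"
    proof
      fix d assume "d \<in> D'"
      then obtain b c where bc: "d = b * c" "b dvd q ^ k" "c dvd L"
        unfolding D'_def using division_decomp by blast
      then obtain i where "i \<le> k" "b = q ^ i" using divides_primepow_nat[OF qp] by blast
      then show "d \<in> (\<lambda>(i, e). q ^ i * e) ` ({..k} \<times> D)"
        using bc unfolding D_def by (auto intro!: image_eqI[where x = "(i, c)"])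
    qed
  qed
  have fD: "finite D" unfolding D_def using L0 by simp
  have "(\<Sum>d | d dvd (\<Prod>p\<in>insert q P. p ^ n p). \<Prod>p\<in>insert q P. g p (multiplicity p d))
      = (\<Sum>d\<in>D'. g q (multiplicity q d) * F d)"
    unfolding D'_def F_def L_def k_def using insert(1,2) by simp
  also have "\<dots> = (\<Sum>x\<in>{..k} \<times> D. g q (fst x) * F (snd x))"
  proof (rule sum.reindex_cong[OF inj img[symmetric]], clarify)
    fix i e assume "i \<le> k" "e \<in> D"
    then show "g q (multiplicity q (q ^ i * e)) * F (q ^ i * e) = g q (fst (i, e)) * F (snd (i, e))"
      using mq mp unfolding F_def by simp
  qed
  also have "\<dots> = (\<Sum>i\<le>k. g q i) * (\<Sum>e\<in>D. F e)"
    unfolding sum_product sum.cartesian_product by (simp add: case_prod_beta)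
  also have "(\<Sum>e\<in>D. F e) = (\<Prod>p\<in>P. \<Sum>i\<le>n p. g p i)"
    using insert.IH Pp unfolding D_def F_def L_def by simp
  finally show ?case using insert(1,2) k_def by simp
qed



lemma alpha_le: "ln (3/2) / ln 2 \<le> (3/5::real)"
proof -
  have "5 * ln (3/2::real) = ln ((3/2)^5)" using ln_realpow[of "3/2::real" 5] by simp
  also have "\<dots> \<le> ln (2^3)" by (simp add: power_divide)
  also have "\<dots> = 3 * ln 2" using ln_realpow[of "2::real" 3] by simp
  finally show ?thesis by (simp add: divide_simps)
qed

lemma key_p:
  fixes p :: nat
  assumes "prime p"
  shows "2 * real p powr (ln (3/2) / ln 2) \<le> real p + 1"
proof (cases "p = 2")
  case True
  have "(2::real) powr (ln (3/2) / ln 2) = 3/2" by (simp add: powr_def)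
  then show ?thesis using True by simp
next
  case False
  then have p3: "real p \<ge> 3" using prime_ge_2_nat[OF assms] by simp
  let ?x = "real p powr (3/5)"
  have "real p powr (ln (3/2) / ln 2) \<le> ?x"
    by (rule powr_mono[OF alpha_le]) (use p3 in simp)
  moreover have "(2 * ?x) ^ 5 \<le> (real p + 1) ^ 5"
  proof -
    have pp: "real p \<noteq> 0" using p3 by simp
    have "?x ^ 5 = real p powr (of_nat 5 * (3/5))" by (rule powr_power[OF pp])
    also have "\<dots> = real p powr (real 3)" by simp
    also have "\<dots> = real p ^ 3" using p3 by (intro powr_realpow) simp
    finally have "(2 * ?x) ^ 5 = 32 * real p ^ 3" by (simp only: power_mult_distrib) simp
    moreover have "(real p + 1) ^ 5 - 32 * real p ^ 3 = 160 + 416*(real p-3) + 352*(real p-3)^2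
        + 128*(real p-3)^3 + 20*(real p-3)^4 + (real p-3)^5"
      by algebra
    moreover have "0 \<le> 160 + 416*(real p-3) + 352*(real p-3)^2
        + 128*(real p-3)^3 + 20*(real p-3)^4 + (real p-3)^5" using p3 by simp
    ultimately show ?thesis by linarith
  qed
  then have "2 * ?x \<le> real p + 1"
    using p3 power_mono_iff[of "2 * ?x" "real p + 1" 5] by simp
  ultimately show ?thesis by linarith
qed

lemma key_ratio:
  fixes p :: nat
  assumes "prime p"
  shows "2 / (real p + 1) \<le> real p powr (- (ln (3/2) / ln 2))"
proof -
  have pp: "real p > 0" using assms prime_gt_0_nat by simp
  have "2 \<le> (real p + 1) * real p powr (- (ln (3/2) / ln 2))"
    using key_p[OF assms] pp by (simp add: powr_minus divide_simps)
  then show ?thesis using pp by (simp add: divide_simps mult.commute)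
qed



theorem lemma6p3:
  fixes l :: nat
  assumes "l > 0"
  shows "(\<Sum>d | d dvd l. c_ell l d) / nu l \<le> real l powr (- (ln (3/2) / ln 2))"
proof -
  define P where "P = prime_factors l"
  define n where "n p = multiplicity p l" for p
  define a :: real where "a = - (ln (3/2) / ln 2)"
  have fP: "finite P" unfolding P_def by simp
  have Pp: "\<forall>p\<in>P. prime p" unfolding P_def by auto
  have lprod: "(\<Prod>p\<in>P. p ^ n p) = l"
    unfolding P_def n_def using prod_prime_factors[of l] assms by simp
  define S where "S p = (\<Sum>i\<le>n p. cheb_c i (n p))" for p
  have "(\<Sum>d | d dvd l. c_ell l d)
      = (\<Sum>d | d dvd (\<Prod>p\<in>P. p ^ n p). \<Prod>p\<in>P. (\<lambda>p i. cheb_c i (n p)) p (multiplicity p d))"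
    using lprod unfolding c_ell_def P_def n_def by simp
  also have "\<dots> = (\<Prod>p\<in>P. S p)"
    unfolding S_def by (rule div_sum_prod[OF fP Pp])
  finally have sumeq: "(\<Sum>d | d dvd l. c_ell l d) = (\<Prod>p\<in>P. S p)" .
  have nueq: "nu l = (\<Prod>p\<in>P. (real p + 1) ^ n p)"
    unfolding nu_def P_def n_def by simp
  have rhs: "real l powr a = (\<Prod>p\<in>P. (real p powr a) ^ n p)"
  proof -
    have "real l = real (\<Prod>p\<in>P. p ^ n p)" using lprod by simp
    also have "\<dots> = (\<Prod>p\<in>P. real p ^ n p)" by (simp only: of_nat_prod of_nat_power)
    finally have "real l = (\<Prod>p\<in>P. real p ^ n p)" .
    then have "real l powr a = (\<Prod>p\<in>P. (real p ^ n p) powr a)"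
      by (simp add: prod_powr_distrib)
    also have "\<dots> = (\<Prod>p\<in>P. (real p powr a) ^ n p)"
    proof (rule prod.cong[OF refl])
      fix p assume "p \<in> P"
      then have pp: "real p > 0" using Pp prime_gt_0_nat by auto
      have "(real p ^ n p) powr a = (real p powr real (n p)) powr a" using pp by (simp add: powr_realpow)
      also have "\<dots> = real p powr (real (n p) * a)" by (simp add: powr_powr)
      also have "\<dots> = (real p powr a) ^ n p" using pp by (simp add: powr_power)
      finally show "(real p ^ n p) powr a = (real p powr a) ^ n p" .
    qed
    finally show ?thesis .
  qed
  have "(\<Prod>p\<in>P. S p) / (\<Prod>p\<in>P. (real p + 1) ^ n p) = (\<Prod>p\<in>P. S p / (real p + 1) ^ n p)"
    by (simp add: prod_dividef)
  also have "\<dots> \<le> (\<Prod>p\<in>P. (real p powr a) ^ n p)"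
  proof (rule prod_mono, rule conjI)
    fix p assume "p \<in> P"
    then have pr: "prime p" using Pp by auto
    have Sc: "S p = (\<Sum>i=0..n p. cc (n p) i)"
      unfolding S_def cheb_c_def cheb_coeffs_eq atLeast0AtMost ..
    have S0: "0 \<le> S p" unfolding Sc by (intro sum_nonneg) (simp add: cc_nonneg)
    show "0 \<le> S p / (real p + 1) ^ n p" using S0 by simp
    have "S p / (real p + 1) ^ n p \<le> 2 ^ n p / (real p + 1) ^ n p"
      using cc_sum[of "n p"] unfolding Sc by (simp add: divide_right_mono)
    also have "\<dots> = (2 / (real p + 1)) ^ n p" by (simp add: power_divide)
    also have "\<dots> \<le> (real p powr a) ^ n p"
      unfolding a_def by (rule power_mono[OF key_ratio[OF pr]]) simp
    finally show "S p / (real p + 1) ^ n p \<le> (real p powr a) ^ n p" .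
  qed
  finally show ?thesis using sumeq nueq rhs a_def by simp
qed

end
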